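(* Let $n\le m$ be natural numbers with $n$ coprime to $m$. Then $\frac{m!}{(n-1)!}\leq\dim(W_{n,m})$.
   Context: $\mathbb{F}$ is a field of characteristic zero; $\mathbb{F}\langle X\rangle$ the free non-unitary associative algebra on $X=\{x_1,x_2,\dots\}$; $(x^n)^T$ the smallest ideal containing $x^n$ invariant under all algebra endomorphisms; $V_m$ the space of multilinear polynomials of degree $m$ in $x_1,\dots,x_m$; $W_{n,m}:=V_m\cap(x^n)^T$ (defined for $n\le m$). *)

theory Defs
  imports Complex_Main "HOL-Library.Function_Algebras"
begin

text \<open>Elements of the free non-unitary associative algebra F<X> on X = {x_1, x_2, ...}
  are represented by their coefficient functions on words (lists of variable indices):
  finitely supported, no constant term (empty word), and only letters i >= 1.\<close>

type_synonym 'a fpoly = "nat list \<Rightarrow> 'a"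

definition fsupp :: "'a::zero fpoly \<Rightarrow> nat list set" where
  "fsupp p = {w. p w \<noteq> 0}"

definition FX :: "'a::zero fpoly set" where
  "FX = {p. finite (fsupp p) \<and> p [] = 0 \<and> (\<forall>w \<in> fsupp p. 0 \<notin> set w)}"

definition pscale :: "'a::times \<Rightarrow> 'a fpoly \<Rightarrow> 'a fpoly" where
  "pscale c p = (\<lambda>w. c * p w)"

definition pmul :: "'a::comm_ring_1 fpoly \<Rightarrow> 'a fpoly \<Rightarrow> 'a fpoly" where
  "pmul p q = (\<lambda>w. \<Sum>k\<le>length w. p (take k w) * q (drop k w))"

definition mono :: "nat list \<Rightarrow> 'a::zero_neq_one fpoly" where
  "mono u = (\<lambda>w. if w = u then 1 else 0)"

fun word_eval :: "(nat \<Rightarrow> 'a::comm_ring_1 fpoly) \<Rightarrow> nat list \<Rightarrow> 'a fpoly" where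
  "word_eval \<sigma> [] = (\<lambda>_. 0)"
| "word_eval \<sigma> [i] = \<sigma> i"
| "word_eval \<sigma> (i # j # w) = pmul (\<sigma> i) (word_eval \<sigma> (j # w))"

definition subst :: "(nat \<Rightarrow> 'a::comm_ring_1 fpoly) \<Rightarrow> 'a fpoly \<Rightarrow> 'a fpoly" where
  "subst \<sigma> p = (\<lambda>v. \<Sum>w\<in>fsupp p. p w * word_eval \<sigma> w v)"

definition is_ideal :: "'a::comm_ring_1 fpoly set \<Rightarrow> bool" where
  "is_ideal I \<longleftrightarrow> I \<subseteq> FX \<and> (\<lambda>_. 0) \<in> I
     \<and> (\<forall>p\<in>I. \<forall>q\<in>I. (\<lambda>w. p w + q w) \<in> I)
     \<and> (\<forall>c. \<forall>p\<in>I. pscale c p \<in> I)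
     \<and> (\<forall>p\<in>I. \<forall>a\<in>FX. pmul a p \<in> I \<and> pmul p a \<in> I)"

definition is_T_ideal :: "'a::comm_ring_1 fpoly set \<Rightarrow> bool" where
  "is_T_ideal I \<longleftrightarrow> is_ideal I \<and> (\<forall>\<sigma>. (\<forall>i. \<sigma> i \<in> FX) \<longrightarrow> (\<forall>p\<in>I. subst \<sigma> p \<in> I))"

definition T_gen :: "'a::comm_ring_1 fpoly set \<Rightarrow> 'a fpoly set" where
  "T_gen S = \<Inter> {I. is_T_ideal I \<and> S \<subseteq> I}"

definition xpow :: "nat \<Rightarrow> 'a::comm_ring_1 fpoly" where
  "xpow n = mono (replicate n 1)"

definition Vm :: "nat \<Rightarrow> 'a::comm_ring_1 fpoly set" where
  "Vm m = {p \<in> FX. \<forall>w \<in> fsupp p. distinct w \<and> set w = {1..m}}"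

definition W :: "nat \<Rightarrow> nat \<Rightarrow> 'a::comm_ring_1 fpoly set" where
  "W n m = Vm m \<inter> T_gen {xpow n}"

end

theory Submission
  imports Defs
begin


lemma sum_fun_apply: "(\<Sum>i\<in>A. f i) x = (\<Sum>i\<in>A. f i x)"
  by (induction A rule: infinite_finite_induct) auto

lemma vs_pscale: "vector_space (pscale :: 'a::field \<Rightarrow> 'a fpoly \<Rightarrow> 'a fpoly)"
  by unfold_locales (auto simp: pscale_def fun_eq_iff algebra_simps)

interpretation pv: vector_space "pscale :: 'a::field \<Rightarrow> 'a fpoly \<Rightarrow> 'a fpoly"
  by (rule vs_pscale)

definition perms :: "nat \<Rightarrow> nat list set" where
  "perms m = {w. set w \<subseteq> {1..m} \<and> length w = m}"

lemma finite_perms: "finite (perms m)"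
  unfolding perms_def by (rule finite_lists_length_eq) simp

lemma Vm_span:
  "(Vm m :: 'a::field fpoly set) \<subseteq> pv.span (mono ` perms m)"
proof
  fix p :: "'a fpoly" assume p: "p \<in> Vm m"
  have supp: "p w = 0" if "w \<notin> perms m" for w
  proof (rule ccontr)
    assume "p w \<noteq> 0"
    then have "w \<in> fsupp p" by (simp add: fsupp_def)
    with p have "distinct w" "set w = {1..m}" by (auto simp: Vm_def)
    then have "length w = m" using distinct_card by fastforce
    with \<open>set w = {1..m}\<close> that show False by (auto simp: perms_def)
  qed
  have "p = (\<Sum>w\<in>perms m. pscale (p w) (mono w))"
  proof
    fix v
    show "p v = (\<Sum>w\<in>perms m. pscale (p w) (mono w)) v"
      unfolding sum_fun_apply pscale_def mono_def
      using supp[of v] finite_perms[of m] by (auto simp: if_distrib cong: if_cong)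
  qed
  also have "\<dots> \<in> pv.span (mono ` perms m)"
    by (intro pv.span_sum pv.span_scale pv.span_base) auto
  finally show "p \<in> pv.span (mono ` perms m)" .
qed

lemma card_le_dim:
  fixes B X :: "'a::field fpoly set"
  assumes "B \<subseteq> X" "X \<subseteq> Vm m" "pv.independent B"
  shows "card B \<le> pv.dim X"
proof -
  obtain A where A: "A \<subseteq> X" "pv.independent A" "X \<subseteq> pv.span A"
    using pv.maximal_independent_subset by blast
  have "A \<subseteq> pv.span (mono ` perms m)" using A(1) assms(2) Vm_span by blast
  then have fA: "finite A"
    using pv.independent_span_bound[OF finite_imageI[OF finite_perms] A(2)] by blast
  have "card B \<le> card A"
    using pv.independent_span_bound[OF fA assms(3)] assms(1) A(3) by blast
  also have "card A = pv.dim X" using pv.basis_card_eq_dim A by blast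
  finally show ?thesis .
qed



definition qS :: "(nat \<Rightarrow> nat list) \<Rightarrow> nat set \<Rightarrow> 'a::comm_ring_1 fpoly" where
  "qS z S = (\<lambda>v. \<Sum>i\<in>S. if z i = v then 1 else 0)"

definition Lc :: "(nat \<Rightarrow> nat list) \<Rightarrow> nat set \<Rightarrow> nat \<Rightarrow> nat list \<Rightarrow> 'a::comm_ring_1" where
  "Lc z S l w = (\<Sum>js\<in>{js. set js \<subseteq> S \<and> length js = l}. if concat (map z js) = w then 1 else 0)"

lemma split_iff:
  assumes "k \<le> length w"
  shows "(a = take k w \<and> b = drop k w) = (k = length a \<and> a @ b = w)"
proof
  assume h: "a = take k w \<and> b = drop k w"
  then have "a @ b = w" by simp
  moreover have "k = length a" using h assms by simp
  ultimately show "k = length a \<and> a @ b = w" by blast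
next
  assume h: "k = length a \<and> a @ b = w"
  then show "a = take k w \<and> b = drop k w" by auto
qed

lemma split_sum_one:
  "(\<Sum>k\<le>length w. (if a = take k w then 1 else 0) * (if b = drop k w then 1 else 0))
     = (if a @ b = w then (1::'a::comm_ring_1) else 0)"
proof -
  have "(\<Sum>k\<le>length w. (if a = take k w then 1 else 0) * (if b = drop k w then (1::'a) else 0))
      = (\<Sum>k\<le>length w. if k = length a \<and> a @ b = w then 1 else 0)"
  proof (rule sum.cong[OF refl])
    fix k assume "k \<in> {..length w}"
    then have e: "(a = take k w \<and> b = drop k w) = (k = length a \<and> a @ b = w)"
      using split_iff by simp
    show "(if a = take k w then 1 else 0) * (if b = drop k w then 1 else 0)
        = (if k = length a \<and> a @ b = w then (1::'a) else 0)"
      unfolding e[symmetric] by simp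
  qed
  also have "\<dots> = (if a @ b = w then 1 else 0)"
  proof (cases "a @ b = w")
    case True
    then have "length a \<in> {..length w}" by auto
    then show ?thesis using True by (simp add: sum.delta')
  qed simp
  finally show ?thesis .
qed
lemma pmul_qS:
  assumes "finite S"
  shows "pmul (qS z S) (\<lambda>w. Lc z S l w) = (\<lambda>w. Lc z S (Suc l) w)"
proof
  fix w
  let ?L = "{js. set js \<subseteq> S \<and> length js = l}"
  have fL: "finite ?L" by (rule finite_lists_length_eq[OF assms])
  have "pmul (qS z S) (\<lambda>w. Lc z S l w) w
      = (\<Sum>k\<le>length w. \<Sum>js\<in>?L. \<Sum>i\<in>S. (if z i = take k w then 1 else 0) * (if concat (map z js) = drop k w then 1 else 0))"
    unfolding pmul_def qS_def Lc_def by (simp add: sum_distrib_left sum_distrib_right)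
  also have "\<dots> = (\<Sum>js\<in>?L. \<Sum>k\<le>length w. \<Sum>i\<in>S. (if z i = take k w then 1 else 0) * (if concat (map z js) = drop k w then 1 else 0))"
    by (rule sum.swap)
  also have "\<dots> = (\<Sum>js\<in>?L. \<Sum>i\<in>S. \<Sum>k\<le>length w. (if z i = take k w then 1 else 0) * (if concat (map z js) = drop k w then 1 else 0))"
    by (rule sum.cong[OF refl], rule sum.swap)
  also have "\<dots> = (\<Sum>i\<in>S. \<Sum>js\<in>?L. \<Sum>k\<le>length w. (if z i = take k w then 1 else 0) * (if concat (map z js) = drop k w then 1 else 0))"
    by (rule sum.swap)
  also have "\<dots> = (\<Sum>i\<in>S. \<Sum>js\<in>?L. if concat (map z (i # js)) = w then 1 else 0)"
    by (simp add: split_sum_one)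
  also have "\<dots> = (\<Sum>p\<in>?L \<times> S. if concat (map z (snd p # fst p)) = w then 1 else 0)"
    by (subst sum.swap, subst sum.cartesian_product) (simp add: case_prod_beta)
  also have "\<dots> = Lc z S (Suc l) w"
    unfolding Lc_def lists_length_Suc_eq
    by (subst sum.reindex) (auto simp: inj_on_def case_prod_beta intro!: sum.cong)
  finally show "pmul (qS z S) (\<lambda>w. Lc z S l w) w = Lc z S (Suc l) w" .
qed

lemma Lc_one: "Lc z S (Suc 0) = qS z S"
proof
  fix w
  have "{js. set js \<subseteq> S \<and> length js = Suc 0} = (\<lambda>i. [i]) ` S"
    by (auto simp: length_Suc_conv)
  then show "Lc z S (Suc 0) w = qS z S w"
    unfolding Lc_def qS_def \<open>{js. set js \<subseteq> S \<and> length js = Suc 0} = (\<lambda>i. [i]) ` S\<close>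
    by (subst sum.reindex) (auto simp: inj_on_def)
qed

lemma word_eval_pow:
  assumes "finite S"
  shows "word_eval (\<lambda>_. qS z S) (replicate (Suc l) 1) = (\<lambda>w. Lc z S (Suc l) w)"
proof (induction l)
  case 0
  then show ?case by (simp add: Lc_one)
next
  case (Suc l)
  then show ?case
    by (metis pmul_qS[OF assms] replicate_Suc word_eval.simps(3))
qed

lemma subst_xpow: "subst \<sigma> (xpow n :: 'a::comm_ring_1 fpoly) = word_eval \<sigma> (replicate n 1)"
proof -
  have "fsupp (xpow n :: 'a fpoly) = {replicate n 1}"
    by (auto simp: fsupp_def xpow_def mono_def)
  then show ?thesis by (simp add: subst_def xpow_def mono_def)
qed



lemma concat_map_inj:
  assumes ne: "\<forall>i\<in>N. z i \<noteq> []"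
    and hd: "\<forall>i\<in>N. \<forall>j\<in>N. hd (z i) = hd (z j) \<longrightarrow> i = j"
  shows "set js \<subseteq> N \<Longrightarrow> set js' \<subseteq> N \<Longrightarrow> concat (map z js) = concat (map z js') \<Longrightarrow> js = js'"
proof (induction js arbitrary: js')
  case Nil
  then show ?case using ne by (cases js') auto
next
  case (Cons i js)
  then obtain j js'' where js': "js' = j # js''"
    using ne by (cases js') auto
  have "z i @ concat (map z js) = z j @ concat (map z js'')" using Cons.prems js' by simp
  moreover have "z i \<noteq> []" "z j \<noteq> []" using ne Cons.prems js' by auto
  ultimately have "hd (z i) = hd (z j)" by (metis hd_append2)
  then have "i = j" using hd Cons.prems js' by auto
  then have "concat (map z js) = concat (map z js'')"
    using \<open>z i @ concat (map z js) = z j @ concat (map z js'')\<close> by simp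
  then have "js = js''" using Cons js' by auto
  then show ?case using \<open>i = j\<close> js' by simp
qed

lemma concat_singletons: "concat (map (\<lambda>x. [x]) A) = A"
  by (induction A) auto

lemma sum_in_ideal:
  assumes "is_ideal I" "finite A" "\<And>a. a \<in> A \<Longrightarrow> F a \<in> I"
  shows "(\<Sum>a\<in>A. F a) \<in> I"
  using assms(2,3)
proof (induction A rule: finite_induct)
  case empty
  then show ?case using assms(1) by (simp add: is_ideal_def zero_fun_def)
next
  case (insert x A)
  then have "F x \<in> I" "(\<Sum>a\<in>A. F a) \<in> I" by auto
  then have "(\<lambda>w. F x w + (\<Sum>a\<in>A. F a) w) \<in> I" using assms(1) by (simp add: is_ideal_def)
  then show ?case using insert by (simp add: plus_fun_def)
qed

definition "Rs0 u m = {1..m} - set u"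
definition "Ns0 u m = insert 0 (Rs0 u m)"
definition "zz0 u i = (if i = 0 then u else [i])"

definition Pu0 :: "nat list \<Rightarrow> nat \<Rightarrow> 'a::comm_ring_1 fpoly" where
  "Pu0 u m = (\<lambda>w. if distinct w \<and> set w = {1..m} \<and> (\<exists>A B. w = A @ u @ B) then 1 else 0)"

context
  fixes u :: "nat list" and m k n :: nat
  assumes du: "distinct u" and su: "set u \<subseteq> {1..m}" and lu: "length u = k"
    and k1: "1 \<le> k" and km: "k \<le> m" and nk: "n = m - k + 1"
begin

abbreviation "Rs \<equiv> Rs0 u m"
abbreviation "Ns \<equiv> Ns0 u m"
abbreviation "zz \<equiv> zz0 u"
abbreviation "Pu \<equiv> Pu0 u m"

lemma fin_Ns: "finite Ns" by (simp add: Ns0_def Rs0_def)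

lemma card_Ns: "card Ns = n"
proof -
  have "card Rs = m - k" unfolding Rs0_def using su lu du
    by (simp add: card_Diff_subset distinct_card)
  moreover have "0 \<notin> Rs" by (simp add: Rs0_def)
  ultimately show ?thesis using nk by (simp add: Ns0_def Rs0_def)
qed

lemma zz0: "zz 0 = u" by (simp add: zz0_def)

lemma concat_zz: "0 \<notin> set A \<Longrightarrow> concat (map zz A) = A"
  by (induction A) (auto simp: zz0_def)

lemma zz_ne: "zz i \<noteq> []" using k1 lu by (auto simp: zz0_def)

lemma zz_hd: "i \<in> Ns \<Longrightarrow> j \<in> Ns \<Longrightarrow> hd (zz i) = hd (zz j) \<Longrightarrow> i = j"
proof -
  assume i: "i \<in> Ns" and j: "j \<in> Ns" and h: "hd (zz i) = hd (zz j)"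
  have hu: "hd u \<in> set u" using k1 lu by (cases u) auto
  show "i = j"
  proof (cases "i = 0"; cases "j = 0")
    assume "i = 0" "j \<noteq> 0"
    then have "hd u = j" using h by (simp add: zz0_def)
    then show ?thesis using j hu \<open>j \<noteq> 0\<close> by (auto simp: Ns0_def Rs0_def)
  next
    assume "i \<noteq> 0" "j = 0"
    then have "hd u = i" using h by (simp add: zz0_def)
    then show ?thesis using i hu \<open>i \<noteq> 0\<close> by (auto simp: Ns0_def Rs0_def)
  qed (use h in \<open>auto simp: zz0_def\<close>)
qed

lemma parse_iff:
  "(\<exists>js. set js = Ns \<and> length js = n \<and> concat (map zz js) = w)
   \<longleftrightarrow> (distinct w \<and> set w = {1..m} \<and> (\<exists>A B. w = A @ u @ B))"
proof
  assume "\<exists>js. set js = Ns \<and> length js = n \<and> concat (map zz js) = w"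
  then obtain js where js: "set js = Ns" "length js = n" "concat (map zz js) = w" by blast
  have djs: "distinct js" using js card_Ns by (metis card_distinct)
  have "0 \<in> set js" using js by (simp add: Ns0_def)
  then obtain A B where AB: "js = A @ 0 # B" by (metis split_list)
  have A0: "0 \<notin> set A" and B0: "0 \<notin> set B" using djs AB by auto
  have "concat (map zz A) = A" "concat (map zz B) = B" using A0 B0 by (auto simp: concat_zz)
  then have w: "w = A @ u @ B" using js(3) AB by (simp add: concat_singletons zz0)
  have "set A \<union> set B = set js - {0}" using AB A0 B0 by auto
  also have "\<dots> = Rs" using js(1) by (auto simp: Ns0_def Rs0_def)
  finally have "set A \<union> set B = Rs" .
  then have sw: "set w = {1..m}" using w su by (auto simp: Rs0_def)
  have "length w = m" using w js(2) AB lu nk km by simp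
  then have "distinct w" using sw by (simp add: card_distinct)
  then show "distinct w \<and> set w = {1..m} \<and> (\<exists>A B. w = A @ u @ B)" using sw w by blast
next
  assume "distinct w \<and> set w = {1..m} \<and> (\<exists>A B. w = A @ u @ B)"
  then obtain A B where w: "w = A @ u @ B" and dw: "distinct w" and sw: "set w = {1..m}" by blast
  let ?js = "A @ 0 # B"
  have "0 \<notin> set w" using sw by auto
  then have A0: "0 \<notin> set A" and B0: "0 \<notin> set B" using w by auto
  have "concat (map zz A) = A" "concat (map zz B) = B" using A0 B0 by (auto simp: concat_zz)
  then have c: "concat (map zz ?js) = w" using w by (simp add: concat_singletons zz0)
  have "set A \<union> set B = Rs" using sw w dw by (auto simp: Rs0_def)
  then have s: "set ?js = Ns" by (auto simp: Ns0_def)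
  have "length w = m" using dw sw by (metis distinct_card card_atLeastAtMost diff_Suc_1)
  then have "length ?js = n" using w lu nk by simp
  then show "\<exists>js. set js = Ns \<and> length js = n \<and> concat (map zz js) = w" using c s by blast
qed


lemma count_eq_Pu:
  "(\<lambda>w. \<Sum>js\<in>{js. set js = Ns \<and> length js = n}. if concat (map zz js) = w then 1 else 0) = (Pu :: 'a::comm_ring_1 fpoly)"
proof
  fix w
  let ?L = "{js. set js = Ns \<and> length js = n}"
  have fL: "finite ?L"
    by (rule finite_subset[OF _ finite_lists_length_eq[OF fin_Ns, of n]]) auto
  show "(\<Sum>js\<in>?L. if concat (map zz js) = w then 1 else 0) = (Pu :: 'a fpoly) w"
  proof (cases "\<exists>js. set js = Ns \<and> length js = n \<and> concat (map zz js) = w")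
    case True
    then obtain js0 where js0: "js0 \<in> ?L" "concat (map zz js0) = w" by blast
    have "(\<Sum>js\<in>?L. if concat (map zz js) = w then 1 else (0::'a))
        = (\<Sum>js\<in>?L. if js = js0 then 1 else 0)"
    proof (rule sum.cong[OF refl])
      fix js assume "js \<in> ?L"
      then have "concat (map zz js) = w \<longleftrightarrow> js = js0"
        using concat_map_inj[of Ns zz js js0] zz_ne zz_hd js0 by auto
      then show "(if concat (map zz js) = w then 1 else (0::'a)) = (if js = js0 then 1 else 0)"
        by simp
    qed
    also have "\<dots> = 1" using fL js0(1) by (simp add: sum.delta')
    finally show ?thesis using True parse_iff by (simp add: Pu0_def)
  next
    case False
    then have "(\<Sum>js\<in>?L. if concat (map zz js) = w then 1 else (0::'a)) = 0"
      by (intro sum.neutral) auto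
    then show ?thesis using False parse_iff by (simp add: Pu0_def)
  qed
qed

lemma Lc_group:
  assumes "finite S"
  shows "Lc zz S n w = (\<Sum>T\<in>Pow S. \<Sum>js\<in>{js. set js = T \<and> length js = n}. if concat (map zz js) = w then 1 else (0::'a::comm_ring_1))"
proof -
  let ?L = "{js. set js \<subseteq> S \<and> length js = n}"
  have fL: "finite ?L" by (rule finite_lists_length_eq[OF assms])
  have "Lc zz S n w = (\<Sum>T\<in>Pow S. \<Sum>js\<in>{js. js \<in> ?L \<and> set js = T}. if concat (map zz js) = w then 1 else (0::'a))"
    unfolding Lc_def by (rule sum.group[symmetric, OF fL]) (use assms in auto)
  also have "\<dots> = (\<Sum>T\<in>Pow S. \<Sum>js\<in>{js. set js = T \<and> length js = n}. if concat (map zz js) = w then 1 else (0::'a))"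
    by (rule sum.cong[OF refl], rule sum.cong) auto
  finally show ?thesis .
qed

lemma polar_eq:
  "(\<Sum>js\<in>{js. set js = Ns \<and> length js = n}. if concat (map zz js) = w then 1 else (0::'a::comm_ring_1))
   = (\<Sum>T\<in>Pow Ns. (-1) ^ (card Ns - card T) * Lc zz T n w)"
  by (rule inclusion_exclusion_mobius[OF _ fin_Ns]) (simp add: Lc_group)

lemma qS_FX: "T \<subseteq> Ns \<Longrightarrow> finite T \<Longrightarrow> (qS zz T :: 'a::comm_ring_1 fpoly) \<in> FX"
proof -
  assume T: "T \<subseteq> Ns" "finite T"
  have sub: "fsupp (qS zz T :: 'a fpoly) \<subseteq> zz ` T"
  proof
    fix v assume "v \<in> fsupp (qS zz T :: 'a fpoly)"
    then have "(\<Sum>i\<in>T. if zz i = v then 1 else (0::'a)) \<noteq> 0" by (simp add: fsupp_def qS_def)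
    then have "\<not> (\<forall>i\<in>T. (if zz i = v then 1 else (0::'a)) = 0)"
      using sum.neutral[of T "\<lambda>i. if zz i = v then 1 else (0::'a)"] by argo
    then obtain i where "i \<in> T" "zz i = v" by (auto split: if_splits)
    then show "v \<in> zz ` T" by blast
  qed
  have nil: "(qS zz T :: 'a fpoly) [] = 0"
    using zz_ne by (simp add: qS_def)
  have letters: "0 \<notin> set v" if vT: "v \<in> zz ` T" for v
  proof -
    obtain i where i: "i \<in> T" "v = zz i" using vT by blast
    show ?thesis
    proof (cases "i = 0")
      case True then show ?thesis using i su by (auto simp: zz0_def)
    next
      case False then show ?thesis using i by (auto simp: zz0_def)
    qed
  qed
  have "finite (fsupp (qS zz T :: 'a fpoly))" using finite_subset[OF sub finite_imageI[OF T(2)]] .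
  moreover have "\<forall>w\<in>fsupp (qS zz T :: 'a fpoly). 0 \<notin> set w" using sub letters by blast
  ultimately show ?thesis unfolding FX_def using nil by simp
qed

lemma Pu_T: "(Pu :: 'a::comm_ring_1 fpoly) \<in> T_gen {xpow n}"
  unfolding T_gen_def
proof (intro InterI, clarsimp)
  fix I :: "'a fpoly set" assume TI: "is_T_ideal I" and xI: "xpow n \<in> I"
  have id: "is_ideal I" using TI by (simp add: is_T_ideal_def)
  have n1: "n = Suc (n - 1)" using nk by simp
  have mem: "pscale ((-1) ^ (card Ns - card T)) (\<lambda>w. Lc zz T n w) \<in> I" if T: "T \<in> Pow Ns" for T
  proof -
    have fT: "finite T" using T fin_Ns finite_subset by auto
    have qF: "(qS zz T :: 'a fpoly) \<in> FX" using qS_FX[of T] T fT by auto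
    have all: "\<forall>\<sigma>. (\<forall>i. \<sigma> i \<in> FX) \<longrightarrow> (\<forall>p\<in>I. subst \<sigma> p \<in> I)" using TI by (simp add: is_T_ideal_def)
    have "subst (\<lambda>_. qS zz T :: 'a fpoly) (xpow n) \<in> I"
      using all[rule_format, of "\<lambda>_. qS zz T" "xpow n"] qF xI by simp
    moreover have "subst (\<lambda>_. qS zz T :: 'a fpoly) (xpow n) = (\<lambda>w. Lc zz T n w)"
      using word_eval_pow[OF fT, of zz "n - 1"] n1 by (simp add: subst_xpow)
    ultimately have "(\<lambda>w. Lc zz T n w) \<in> I" by simp
    then show ?thesis using id by (simp add: is_ideal_def)
  qed
  have "(\<Sum>T\<in>Pow Ns. pscale ((-1) ^ (card Ns - card T)) (\<lambda>w. Lc zz T n w)) \<in> I"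
    by (rule sum_in_ideal[OF id]) (use fin_Ns mem in auto)
  moreover have "(\<Sum>T\<in>Pow Ns. pscale ((-1) ^ (card Ns - card T)) (\<lambda>w. Lc zz T n w)) = (Pu :: 'a fpoly)"
  proof
    fix w
    show "(\<Sum>T\<in>Pow Ns. pscale ((-1) ^ (card Ns - card T)) (\<lambda>w. Lc zz T n w)) w = (Pu :: 'a fpoly) w"
      unfolding sum_fun_apply pscale_def polar_eq[symmetric] count_eq_Pu[symmetric] by simp
  qed
  ultimately show "Pu \<in> I" by simp
qed

lemma Pu_supp: "w \<in> fsupp (Pu :: 'a::comm_ring_1 fpoly) \<Longrightarrow> distinct w \<and> set w = {1..m}"
  by (simp add: fsupp_def Pu0_def split: if_splits)

lemma Pu_Vm: "(Pu :: 'a::comm_ring_1 fpoly) \<in> Vm m"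
proof -
  have sub: "fsupp (Pu :: 'a fpoly) \<subseteq> perms m"
  proof
    fix w assume "w \<in> fsupp (Pu :: 'a fpoly)"
    then have d: "distinct w" and s: "set w = {1..m}" using Pu_supp by blast+
    then have "length w = m" using distinct_card[OF d] by simp
    then show "w \<in> perms m" using s by (simp add: perms_def)
  qed
  have "m \<ge> 1" using k1 km by simp
  then have nil: "(Pu :: 'a fpoly) [] = 0" by (auto simp: Pu0_def)
  have fin: "finite (fsupp (Pu :: 'a fpoly))" using finite_subset[OF sub finite_perms] .
  have "\<forall>w\<in>fsupp (Pu :: 'a fpoly). 0 \<notin> set w" using Pu_supp by fastforce
  then have "(Pu :: 'a fpoly) \<in> FX" unfolding FX_def using nil fin by simp
  then show ?thesis unfolding Vm_def using Pu_supp by blast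
qed

end


lemma window_iff:
  assumes lw: "length w = m" and lu: "length u = k" and k1: "1 \<le> k" and km: "k \<le> m"
  shows "(\<exists>A B. w = A @ u @ B) \<longleftrightarrow> (\<exists>j<m - k + 1. u = take k (drop j w))"
proof
  assume "\<exists>A B. w = A @ u @ B"
  then obtain A B where w: "w = A @ u @ B" by blast
  have "length A < m - k + 1" using w lw lu by simp
  moreover have "u = take k (drop (length A) w)" using w lu by simp
  ultimately show "\<exists>j<m - k + 1. u = take k (drop j w)" by blast
next
  assume "\<exists>j<m - k + 1. u = take k (drop j w)"
  then obtain j where j: "j < m - k + 1" "u = take k (drop j w)" by blast
  have "w = take j w @ take k (drop j w) @ drop k (drop j w)" by (metis append_take_drop_id)
  then show "\<exists>A B. w = A @ u @ B" using j by blast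
qed

lemma window_inj:
  assumes dw: "distinct w" and lw: "length w = m" and k1: "1 \<le> k" and km: "k \<le> m"
  shows "inj_on (\<lambda>j. take k (drop j w)) {..<m - k + 1}"
proof
  fix i j assume i: "i \<in> {..<m - k + 1}" and j: "j \<in> {..<m - k + 1}"
    and e: "take k (drop i w) = take k (drop j w)"
  have "take k (drop i w) ! 0 = w ! i" using i k1 km lw by (simp add: nth_take nth_drop)
  moreover have "take k (drop j w) ! 0 = w ! j" using j k1 km lw by (simp add: nth_take nth_drop)
  ultimately have "w ! i = w ! j" using e by simp
  moreover have "i < length w" "j < length w" using i j k1 km lw by auto
  ultimately show "i = j" using dw nth_eq_iff_index_eq by blast
qed


definition Us :: "nat \<Rightarrow> nat \<Rightarrow> nat list set" where
  "Us m k = {u. length u = k \<and> distinct u \<and> set u \<subseteq> {1..m}}"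

lemma finite_Us: "finite (Us m k)"
  by (rule finite_subset[OF _ finite_lists_length_eq[of "{1..m}" k]]) (auto simp: Us_def)

lemma window_in_Us:
  assumes dw: "distinct w" and sw: "set w = {1..m}" and lw: "length w = m" and km: "k \<le> m"
    and j: "j < m - k + 1"
  shows "take k (drop j w) \<in> Us m k"
proof -
  have "length (take k (drop j w)) = k" using j km lw by simp
  moreover have "distinct (take k (drop j w))" using dw by simp
  moreover have "set (take k (drop j w)) \<subseteq> {1..m}" using sw
    by (metis set_drop_subset set_take_subset subset_trans)
  ultimately show ?thesis by (simp add: Us_def)
qed

lemma sum_Pu_eval:
  fixes c :: "nat list \<Rightarrow> 'a::comm_ring_1"
  assumes dw: "distinct w" and sw: "set w = {1..m}" and k1: "1 \<le> k" and km: "k \<le> m"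
  shows "(\<Sum>u\<in>Us m k. c u * Pu0 u m w) = (\<Sum>j<m - k + 1. c (take k (drop j w)))"
proof -
  have lw: "length w = m" using distinct_card[OF dw] sw by simp
  let ?Win = "(\<lambda>j. take k (drop j w)) ` {..<m - k + 1}"
  have sub: "?Win \<subseteq> Us m k" using window_in_Us[OF dw sw lw km] by blast
  have "(\<Sum>u\<in>Us m k. c u * Pu0 u m w) = (\<Sum>u\<in>Us m k. if u \<in> ?Win then c u else 0)"
  proof (rule sum.cong[OF refl])
    fix u assume u: "u \<in> Us m k"
    then have lu: "length u = k" by (simp add: Us_def)
    have "Pu0 u m w = (if \<exists>A B. w = A @ u @ B then 1 else (0::'a))"
      using dw sw unfolding Pu0_def by simp
    also have "\<dots> = (if u \<in> ?Win then 1 else 0)"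
      using window_iff[OF lw lu k1 km] by auto
    finally show "c u * Pu0 u m w = (if u \<in> ?Win then c u else 0)" by simp
  qed
  also have "\<dots> = (\<Sum>u\<in>Us m k \<inter> ?Win. c u)"
    by (rule sum.inter_restrict[OF finite_Us, symmetric])
  also have "Us m k \<inter> ?Win = ?Win" using sub by blast
  also have "(\<Sum>u\<in>?Win. c u) = (\<Sum>j<m - k + 1. c (take k (drop j w)))"
    by (rule sum.reindex[OF window_inj[OF dw lw k1 km], unfolded comp_def])
  finally show ?thesis .
qed


lemma rotate_window:
  assumes lw0: "length w0 = m" and j: "j < m - k + 1" and km: "k \<le> m" and k1: "1 \<le> k"
  shows "take k (drop j (rotate t w0)) = map (\<lambda>i. w0 ! ((t + j + i) mod m)) [0..<k]"
proof (rule nth_equalityI)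
  show "length (take k (drop j (rotate t w0))) = length (map (\<lambda>i. w0 ! ((t + j + i) mod m)) [0..<k])"
    using lw0 j km by simp
next
  fix i assume "i < length (take k (drop j (rotate t w0)))"
  then have i: "i < k" and ji: "j + i < m" using lw0 j km by auto
  have "take k (drop j (rotate t w0)) ! i = rotate t w0 ! (j + i)"
    using i ji lw0 by (simp add: nth_take nth_drop)
  also have "\<dots> = w0 ! ((t + (j + i)) mod m)" using ji lw0 by (simp add: nth_rotate)
  finally show "take k (drop j (rotate t w0)) ! i = map (\<lambda>i. w0 ! ((t + j + i) mod m)) [0..<k] ! i"
    using i by (simp add: add.assoc)
qed

lemma periodic_const:
  fixes a :: "nat \<Rightarrow> 'a"
  assumes pn: "\<And>t. a (t + n) = a t" and pm: "\<And>t. a (t + m) = a t"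
    and cop: "coprime n m" and n1: "1 \<le> n"
  shows "a t = a 0"
proof -
  have pn': "a (t + n * x) = a t" for t x
  proof (induction x)
    case (Suc x)
    have "t + n * Suc x = (t + n * x) + n" by simp
    then show ?case using Suc pn[of "t + n * x"] by (simp only:)
  qed simp
  have pm': "a (t + m * y) = a t" for t y
  proof (induction y)
    case (Suc y)
    have "t + m * Suc y = (t + m * y) + m" by simp
    then show ?case using Suc pm[of "t + m * y"] by (simp only:)
  qed simp
  obtain x y where xy: "n * x = m * y + gcd n m" using bezout_nat[of n m] n1 by auto
  then have xy1: "n * x = m * y + 1" using cop by simp
  have step: "a (t + 1) = a t" for t
  proof -
    have "a (t + 1) = a (t + 1 + m * y)" by (rule pm'[symmetric])
    also have "t + 1 + m * y = t + n * x" using xy1 by simp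
    also have "a (t + n * x) = a t" by (rule pn')
    finally show ?thesis .
  qed
  show ?thesis by (induction t) (simp_all add: step[simplified])
qed


lemma coeff_zero:
  fixes c :: "nat list \<Rightarrow> 'a::field_char_0"
  assumes n1: "1 \<le> n" and nm: "n \<le> m" and cop: "coprime n m" and kdef: "k = m - n + 1"
    and rel: "\<And>w. distinct w \<Longrightarrow> set w = {1..m} \<Longrightarrow> (\<Sum>j<n. c (take k (drop j w))) = 0"
    and u0: "u0 \<in> Us m k"
  shows "c u0 = 0"
proof -
  have k1: "1 \<le> k" and km: "k \<le> m" and nk: "m - k + 1 = n" using kdef n1 nm by auto
  have du: "distinct u0" and su: "set u0 \<subseteq> {1..m}" and lu: "length u0 = k" using u0 by (auto simp: Us_def)
  define rest where "rest = sorted_list_of_set ({1..m} - set u0)"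
  define w0 where "w0 = u0 @ rest"
  have dw0: "distinct w0" unfolding w0_def rest_def using du by simp
  have sw0: "set w0 = {1..m}" unfolding w0_def rest_def using su by auto
  have lw0: "length w0 = m" using distinct_card[OF dw0] sw0 by simp
  define a where "a t = c (map (\<lambda>i. w0 ! ((t + i) mod m)) [0..<k])" for t
  have S: "(\<Sum>j<n. a (t + j)) = 0" for t
  proof -
    have "distinct (rotate t w0)" "set (rotate t w0) = {1..m}" using dw0 sw0 by auto
    then have "(\<Sum>j<n. c (take k (drop j (rotate t w0)))) = 0" by (rule rel)
    moreover have "(\<Sum>j<n. c (take k (drop j (rotate t w0)))) = (\<Sum>j<n. a (t + j))"
    proof (rule sum.cong[OF refl])
      fix j assume "j \<in> {..<n}"
      then have "j < m - k + 1" using nk by simp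
      then show "c (take k (drop j (rotate t w0))) = a (t + j)"
        unfolding a_def using rotate_window[OF lw0 _ km k1] by simp
    qed
    ultimately show ?thesis by simp
  qed
  have pn: "a (t + n) = a t" for t
  proof -
    have "(\<Sum>j<Suc n. a (t + j)) = (\<Sum>j<n. a (t + j)) + a (t + n)" by simp
    moreover have "(\<Sum>j<Suc n. a (t + j)) = a t + (\<Sum>j<n. a (Suc t + j))"
      by (subst sum.lessThan_Suc_shift) simp
    ultimately show ?thesis using S[of t] S[of "Suc t"] by simp
  qed
  have pm: "a (t + m) = a t" for t
  proof -
    have "\<And>i. (t + m + i) mod m = (t + i) mod m"
      by (metis add.commute add.left_commute mod_add_self2)
    then show ?thesis unfolding a_def by simp
  qed
  have const: "a t = a 0" for t by (rule periodic_const[OF pn pm cop n1])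
  have "(\<Sum>j<n. a (0 + j)) = (\<Sum>j<n. a 0)" by (rule sum.cong[OF refl]) (rule const)
  then have "(\<Sum>j<n. a (0 + j)) = of_nat n * a 0" by simp
  then have "of_nat n * a 0 = 0" using S[of 0] by simp
  then have a0: "a 0 = 0" using n1 by simp
  have "map (\<lambda>i. w0 ! ((0 + i) mod m)) [0..<k] = u0"
  proof (rule nth_equalityI)
    show "length (map (\<lambda>i. w0 ! ((0 + i) mod m)) [0..<k]) = length u0" using lu by simp
  next
    fix i assume "i < length (map (\<lambda>i. w0 ! ((0 + i) mod m)) [0..<k])"
    then have i: "i < k" by simp
    then have "i < m" using km by simp
    then show "map (\<lambda>i. w0 ! ((0 + i) mod m)) [0..<k] ! i = u0 ! i"
      using i lu by (simp add: w0_def nth_append)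
  qed
  then show ?thesis using a0 unfolding a_def by simp
qed



lemma indep_indexed:
  fixes c :: "nat list \<Rightarrow> 'a::field_char_0"
  assumes n1: "1 \<le> n" and nm: "n \<le> m" and cop: "coprime n m" and kdef: "k = m - n + 1"
    and zero: "\<And>w. (\<Sum>u\<in>Us m k. c u * Pu0 u m w) = 0"
    and u: "u \<in> Us m k"
  shows "c u = 0"
proof (rule coeff_zero[OF n1 nm cop kdef _ u])
  fix w :: "nat list" assume dw: "distinct w" and sw: "set w = {1..m}"
  have "m - k + 1 = n" "1 \<le> k" "k \<le> m" using kdef n1 nm by auto
  then show "(\<Sum>j<n. c (take k (drop j w))) = 0"
    using sum_Pu_eval[OF dw sw, of k c] zero[of w] by simp
qed

lemma Pu_inj:
  assumes n1: "1 \<le> n" and nm: "n \<le> m" and cop: "coprime n m" and kdef: "k = m - n + 1"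
  shows "inj_on (\<lambda>u. Pu0 u m :: 'a::field_char_0 fpoly) (Us m k)"
proof
  fix u v assume u: "u \<in> Us m k" and v: "v \<in> Us m k" and e: "(Pu0 u m :: 'a fpoly) = Pu0 v m"
  show "u = v"
  proof (rule ccontr)
    assume uv: "u \<noteq> v"
    define c :: "nat list \<Rightarrow> 'a" where "c x = (if x = u then 1 else if x = v then -1 else 0)" for x
    have "(\<Sum>x\<in>Us m k. c x * Pu0 x m w) = 0" for w
    proof -
      have "(\<Sum>x\<in>Us m k. c x * Pu0 x m w)
          = (\<Sum>x\<in>Us m k. (if x = u then (Pu0 u m w :: 'a) else 0) + (if x = v then - Pu0 v m w else 0))"
        by (rule sum.cong[OF refl]) (auto simp: c_def uv)
      also have "\<dots> = Pu0 u m w - Pu0 v m w"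
        using u v finite_Us[of m k] by (simp add: sum.distrib sum.delta)
      finally show ?thesis using e by simp
    qed
    then have "c u = 0" by (rule indep_indexed[OF n1 nm cop kdef _ u])
    then show False by (simp add: c_def)
  qed
qed

lemma Pu_indep:
  assumes n1: "1 \<le> n" and nm: "n \<le> m" and cop: "coprime n m" and kdef: "k = m - n + 1"
  shows "pv.independent ((\<lambda>u. Pu0 u m :: 'a::field_char_0 fpoly) ` Us m k)"
proof (rule pv.independent_if_scalars_zero)
  show "finite ((\<lambda>u. Pu0 u m :: 'a fpoly) ` Us m k)" using finite_Us by simp
next
  fix c :: "'a fpoly \<Rightarrow> 'a" and p
  assume z: "(\<Sum>v\<in>(\<lambda>u. Pu0 u m) ` Us m k. pscale (c v) v) = 0"
    and p: "p \<in> (\<lambda>u. Pu0 u m :: 'a fpoly) ` Us m k"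
  obtain u where u: "u \<in> Us m k" and pu: "p = Pu0 u m" using p by blast
  have z2: "(\<Sum>x\<in>Us m k. pscale (c (Pu0 x m)) (Pu0 x m :: 'a fpoly)) = 0"
    using z by (simp add: sum.reindex[OF Pu_inj[OF n1 nm cop kdef]])
  have "(\<Sum>x\<in>Us m k. c (Pu0 x m) * (Pu0 x m w :: 'a)) = 0" for w
  proof -
    have "(\<Sum>x\<in>Us m k. pscale (c (Pu0 x m)) (Pu0 x m :: 'a fpoly)) w = 0" using z2 by simp
    then show ?thesis by (simp add: sum_fun_apply pscale_def)
  qed
  then have "c (Pu0 u m) = 0"
    using indep_indexed[OF n1 nm cop kdef, of "\<lambda>x. c (Pu0 x m)"] u by blast
  then show "c p = 0" using pu by simp
qed

lemma card_Us:
  assumes "k \<le> m"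
  shows "card (Us m k) = \<Prod>{m - k + 1..m}"
proof -
  have "Us m k = {xs. length xs = k \<and> distinct xs \<and> set xs \<subseteq> {1..m}}" by (simp add: Us_def)
  then show ?thesis using card_lists_distinct_length_eq[of "{1..m}" k] assms by simp
qed

theorem proposition5p5:
  fixes n m :: nat
  assumes "1 \<le> n" and "n \<le> m" and "coprime n m"
  shows "real (fact m) / real (fact (n - 1))
           \<le> real (vector_space.dim (pscale :: 'a::field_char_0 \<Rightarrow> 'a fpoly \<Rightarrow> 'a fpoly) (W n m))"
proof -
  define k where "k = m - n + 1"
  have k1: "1 \<le> k" and km: "k \<le> m" and nk: "n = m - k + 1" using assms by (auto simp: k_def)
  let ?B = "(\<lambda>u. Pu0 u m :: 'a fpoly) ` Us m k"
  have BW: "?B \<subseteq> W n m"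
  proof
    fix p assume "p \<in> ?B"
    then obtain u where u: "u \<in> Us m k" and pu: "p = Pu0 u m" by blast
    have du: "distinct u" and su: "set u \<subseteq> {1..m}" and lu: "length u = k" using u by (auto simp: Us_def)
    have "(Pu0 u m :: 'a fpoly) \<in> Vm m" by (rule Pu_Vm[OF du su lu k1 km nk])
    moreover have "(Pu0 u m :: 'a fpoly) \<in> T_gen {xpow n}" by (rule Pu_T[OF du su lu k1 km nk])
    ultimately show "p \<in> W n m" using pu by (simp add: W_def)
  qed
  have WV: "W n m \<subseteq> (Vm m :: 'a fpoly set)" by (auto simp: W_def)
  have "card ?B \<le> pv.dim (W n m :: 'a fpoly set)"
    by (rule card_le_dim[OF BW WV Pu_indep[OF assms k_def]])
  moreover have "card ?B = card (Us m k)"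
    by (rule card_image[OF Pu_inj[OF assms k_def]])
  moreover have "card (Us m k) = \<Prod>{n..m}" using card_Us[OF km] nk by simp
  ultimately have ineq: "\<Prod>{n..m} \<le> pv.dim (W n m :: 'a fpoly set)" by simp
  have eqr: "real (fact m) / real (fact (n - 1)) = real (\<Prod>{n..m})"
  proof -
    have d: "(fact (n - 1) :: nat) dvd fact m" using assms by (simp add: fact_dvd)
    have "fact m div fact (n - 1) = \<Prod>{n - 1 + 1..m}" using assms by (simp add: fact_div_fact)
    then have "(fact m :: nat) div fact (n - 1) = \<Prod>{n..m}" using assms by simp
    then show ?thesis using real_of_nat_div[OF d] by simp
  qed
  show ?thesis unfolding eqr using ineq by (simp only: of_nat_le_iff)
qed

end
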